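(* Fix $\epsilon > 0$, integers $T_0$ and $T > T_0 + (\frac{1}{2} + 2\epsilon) n \log(n)$. For each $T_0 \le t < T$ let $(i_t, j_t)$ be chosen independently and uniformly at random among all pairs $1 \le i_t < j_t \le n$. Define partitions $\mathcal{P}_t$ of $\{1,\dots,n\}$ for $t = T, T-1, \dots, T_0$ backward in time: $\mathcal{P}_T = \{\{1\},\{2\},\dots,\{n\}\}$, and for $T_0 \le t < T$, if $i_t$ and $j_t$ lie in the same block of $\mathcal{P}_{t+1}$ then $\mathcal{P}_t = \mathcal{P}_{t+1}$, otherwise $\mathcal{P}_t$ is obtained from $\mathcal{P}_{t+1}$ by merging the block containing $i_t$ with the block containing $j_t$. Then for all $n > N_0(\epsilon)$ sufficiently large, $$\mathbb{P}\big[\mathcal{P}_{T_0} = \{\{1,2,\dots,n\}\}\big] \ge 1 - 2n^{-\epsilon},$$ i.e. with probability at least $1 - 2n^{-\epsilon}$ the partition $\mathcal{P}_{T_0}$ consists of the single block $\{1,\dots,n\}$. *)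

theory Defs
  imports "HOL-Probability.Probability"
begin

definition pairs :: "nat \<Rightarrow> (nat \<times> nat) set" where
  "pairs n = {(i, j). 1 \<le> i \<and> i < j \<and> j \<le> n}"

definition block_of :: "nat set set \<Rightarrow> nat \<Rightarrow> nat set" where
  "block_of P i = (THE B. B \<in> P \<and> i \<in> B)"

definition merge_step :: "nat set set \<Rightarrow> nat \<times> nat \<Rightarrow> nat set set" where
  "merge_step P ij = (case ij of (i, j) \<Rightarrow>
     if \<exists>B\<in>P. i \<in> B \<and> j \<in> B then P
     else (P - {block_of P i, block_of P j}) \<union> {block_of P i \<union> block_of P j})"

text \<open>part n T w k is the partition P_(T-k): P_T is the partition into singletons and
  P_t is obtained from P_(t+1) using the pair w t.\<close>
fun part :: "nat \<Rightarrow> int \<Rightarrow> (int \<Rightarrow> nat \<times> nat) \<Rightarrow> nat \<Rightarrow> nat set set" where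
  "part n T w 0 = {{i} | i. i \<in> {1..n}}"
| "part n T w (Suc k) = merge_step (part n T w k) (w (T - int k - 1))"

definition pair_choices :: "nat \<Rightarrow> int \<Rightarrow> int \<Rightarrow> (int \<Rightarrow> nat \<times> nat) pmf" where
  "pair_choices n T0 T = pmf_of_set (PiE {T0..<T} (\<lambda>_. pairs n))"

end

theory Submission
  imports Defs
begin

definition is_part :: "nat \<Rightarrow> nat set set \<Rightarrow> bool" where
  "is_part n P \<longleftrightarrow> (\<forall>B\<in>P. B \<noteq> {}) \<and> \<Union>P = {1..n} \<and> (\<forall>B\<in>P. \<forall>C\<in>P. B \<noteq> C \<longrightarrow> B \<inter> C = {})"

lemma block_of_unique:
  assumes "is_part n P" "C \<in> P" "i \<in> C"
  shows "block_of P i = C"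
  unfolding block_of_def
proof (rule the_equality)
  show "C \<in> P \<and> i \<in> C" using assms by auto
  fix B assume "B \<in> P \<and> i \<in> B"
  then show "B = C" using assms unfolding is_part_def by blast
qed

lemma block_of_in:
  assumes "is_part n P" "i \<in> {1..n}"
  shows "block_of P i \<in> P \<and> i \<in> block_of P i"
proof -
  obtain C where "C \<in> P" "i \<in> C" using assms unfolding is_part_def by blast
  then show ?thesis using block_of_unique[OF assms(1)] by auto
qed

lemma merge_step_props:
  assumes P: "is_part n P" and ij: "(i,j) \<in> pairs n"
  shows "is_part n (merge_step P (i,j)) \<and> (\<exists>B\<in>merge_step P (i,j). i \<in> B \<and> j \<in> B)
     \<and> (\<forall>a b. (\<exists>B\<in>P. a \<in> B \<and> b \<in> B) \<longrightarrow> (\<exists>B\<in>merge_step P (i,j). a \<in> B \<and> b \<in> B))"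
proof (cases "\<exists>B\<in>P. i \<in> B \<and> j \<in> B")
  case True
  then show ?thesis using P by (simp add: merge_step_def)
next
  case False
  have i: "i \<in> {1..n}" and j: "j \<in> {1..n}" using ij by (auto simp: pairs_def)
  define Bi where "Bi = block_of P i"
  define Bj where "Bj = block_of P j"
  have Bi: "Bi \<in> P" "i \<in> Bi" using block_of_in[OF P i] Bi_def by auto
  have Bj: "Bj \<in> P" "j \<in> Bj" using block_of_in[OF P j] Bj_def by auto
  have ne: "Bi \<noteq> Bj" using False Bi Bj by blast
  have M: "merge_step P (i,j) = (P - {Bi, Bj}) \<union> {Bi \<union> Bj}"
    unfolding merge_step_def Bi_def Bj_def prod.case using False by (subst if_not_P) auto
  have disj: "\<forall>B\<in>P. \<forall>C\<in>P. B \<noteq> C \<longrightarrow> B \<inter> C = {}" and nonem: "\<forall>B\<in>P. B \<noteq> {}"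
    and un: "\<Union>P = {1..n}" using P by (auto simp: is_part_def)
  have "is_part n (merge_step P (i,j))"
    unfolding is_part_def M
  proof (intro conjI)
    show "\<forall>B\<in>P - {Bi, Bj} \<union> {Bi \<union> Bj}. B \<noteq> {}" using nonem Bi by auto
    show "\<Union> (P - {Bi, Bj} \<union> {Bi \<union> Bj}) = {1..n}" using un Bi Bj by blast
    show "\<forall>B\<in>P - {Bi, Bj} \<union> {Bi \<union> Bj}. \<forall>C\<in>P - {Bi, Bj} \<union> {Bi \<union> Bj}. B \<noteq> C \<longrightarrow> B \<inter> C = {}"
    proof (intro ballI impI)
      fix B C assume B: "B \<in> P - {Bi, Bj} \<union> {Bi \<union> Bj}" and C: "C \<in> P - {Bi, Bj} \<union> {Bi \<union> Bj}" and BC: "B \<noteq> C"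
      show "B \<inter> C = {}"
      proof (cases "B = Bi \<union> Bj")
        case True
        then have "C \<in> P - {Bi, Bj}" using C BC by auto
        then show ?thesis using True disj Bi Bj by blast
      next
        case f1: False
        then have B': "B \<in> P - {Bi, Bj}" using B by auto
        show ?thesis
        proof (cases "C = Bi \<union> Bj")
          case True then show ?thesis using B' disj Bi Bj by blast
        next
          case False then show ?thesis using B' C BC disj by auto
        qed
      qed
    qed
  qed
  moreover have "\<exists>B\<in>merge_step P (i,j). i \<in> B \<and> j \<in> B" using M Bi Bj by auto
  moreover have "\<forall>a b. (\<exists>B\<in>P. a \<in> B \<and> b \<in> B) \<longrightarrow> (\<exists>B\<in>merge_step P (i,j). a \<in> B \<and> b \<in> B)"
  proof (intro allI impI)
    fix a b assume "\<exists>B\<in>P. a \<in> B \<and> b \<in> B"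
    then obtain B where "B \<in> P" "a \<in> B" "b \<in> B" by blast
    then show "\<exists>B\<in>merge_step P (i,j). a \<in> B \<and> b \<in> B"
      unfolding M by (cases "B = Bi \<or> B = Bj") auto
  qed
  ultimately show ?thesis by blast
qed

lemma part_singletons: "is_part n (part n T w 0)"
  unfolding is_part_def part.simps by (intro conjI; blast)

lemma part_inv:
  assumes "\<forall>k'<k. w (T - int k' - 1) \<in> pairs n"
  shows "is_part n (part n T w k) \<and> (\<forall>k'<k. \<exists>B \<in> part n T w k. fst (w (T - int k' - 1)) \<in> B \<and> snd (w (T - int k' - 1)) \<in> B)"
  using assms
proof (induction k)
  case 0
  have "is_part n (part n T w 0)" by (rule part_singletons)
  then show ?case by blast
next
  case (Suc k)
  obtain i j where ij: "w (T - int k - 1) = (i,j)" by fastforce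
  have IH: "is_part n (part n T w k)" "\<forall>k'<k. \<exists>B \<in> part n T w k. fst (w (T - int k' - 1)) \<in> B \<and> snd (w (T - int k' - 1)) \<in> B"
    using Suc by auto
  have pij: "(i,j) \<in> pairs n" using Suc.prems ij by (metis lessI)
  note M = merge_step_props[OF IH(1) pij]
  show ?case
  proof (intro conjI allI impI)
    show "is_part n (part n T w (Suc k))" using M ij by simp
    fix k' assume "k' < Suc k"
    then consider "k' < k" | "k' = k" by linarith
    then show "\<exists>B\<in>part n T w (Suc k). fst (w (T - int k' - 1)) \<in> B \<and> snd (w (T - int k' - 1)) \<in> B"
    proof cases
      case 1 then show ?thesis using IH(2) M ij by simp
    next
      case 2 then show ?thesis using M ij by simp
    qed
  qed
qed

definition nc :: "nat \<Rightarrow> nat set \<Rightarrow> (nat \<times> nat) set" where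
  "nc n S = {p \<in> pairs n. (fst p \<in> S) = (snd p \<in> S)}"

definition SS :: "nat \<Rightarrow> nat set set" where
  "SS n = {S. S \<subseteq> {1..n} \<and> S \<noteq> {} \<and> 2 * card S \<le> n}"

lemma finite_pairs: "finite (pairs n)"
proof -
  have "pairs n \<subseteq> {1..n} \<times> {1..n}" by (auto simp: pairs_def)
  then show ?thesis by (rule finite_subset) auto
qed

lemma card_pairs_le: "2 * card (pairs n) \<le> n^2"
proof -
  let ?P = "pairs n" and ?Q = "(\<lambda>(a,b). (b,a)) ` pairs n"
  have d: "?P \<inter> ?Q = {}" by (auto simp: pairs_def)
  have c: "card ?Q = card ?P" by (rule card_image) (auto simp: inj_on_def)
  have s: "?P \<union> ?Q \<subseteq> {1..n} \<times> {1..n}" by (auto simp: pairs_def)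
  have "card (?P \<union> ?Q) = card ?P + card ?Q"
    by (rule card_Un_disjoint) (use d finite_pairs in auto)
  moreover have "card (?P \<union> ?Q) \<le> card ({1..n} \<times> {1..n})"
    by (rule card_mono) (use s in auto)
  ultimately show ?thesis using c by (simp add: power2_eq_square)
qed

lemma card_cross_ge:
  assumes "S \<subseteq> {1..n}"
  shows "card S * (n - card S) \<le> card (pairs n - nc n S)"
proof -
  let ?f = "\<lambda>(a,b). (min a b, max a b)"
  have fin: "finite S" using assms finite_subset by blast
  have "card (S \<times> ({1..n} - S)) = card S * (n - card S)"
    using fin assms by (simp add: card_cartesian_product card_Diff_subset)
  moreover have inj: "inj_on ?f (S \<times> ({1..n} - S))"
  proof (rule inj_on_inverseI)
    fix x assume "x \<in> S \<times> ({1..n} - S)"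
    then obtain a b where x: "x = (a,b)" "a \<in> S" "b \<notin> S" by auto
    then have "a \<noteq> b" by auto
    then consider "a < b" | "b < a" by linarith
    then show "(\<lambda>q. if fst q \<in> S then q else (snd q, fst q)) (?f x) = x"
      by cases (use x in \<open>simp_all add: min_def max_def\<close>)
  qed
  moreover have sub: "?f ` (S \<times> ({1..n} - S)) \<subseteq> pairs n - nc n S"
  proof
    fix p assume "p \<in> ?f ` (S \<times> ({1..n} - S))"
    then obtain a b where ab: "a \<in> S" "b \<in> {1..n}" "b \<notin> S" and p: "p = ?f (a,b)" by auto
    have "a \<in> {1..n}" using ab assms by auto
    moreover have "a \<noteq> b" using ab by auto
    ultimately consider "a < b" | "b < a" by linarith
    then show "p \<in> pairs n - nc n S"
    proof cases
      case 1 then show ?thesis using ab p \<open>a \<in> {1..n}\<close> by (simp add: pairs_def nc_def min_def max_def)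
    next
      case 2 then show ?thesis using ab p \<open>a \<in> {1..n}\<close> by (simp add: pairs_def nc_def min_def max_def)
    qed
  qed
  ultimately show ?thesis
    using card_inj_on_le[OF inj sub] finite_pairs by simp
qed

lemma bad_subset:
  assumes n: "n \<ge> 1" and w: "w \<in> PiE {T0..<T} (\<lambda>_. pairs n)"
    and bad: "part n T w (nat (T - T0)) \<noteq> {{1..n}}"
  shows "\<exists>S\<in>SS n. \<forall>t\<in>{T0..<T}. w t \<in> nc n S"
proof -
  define m where "m = nat (T - T0)"
  have "\<forall>k'<m. w (T - int k' - 1) \<in> pairs n"
  proof (intro allI impI)
    fix k' assume "k' < m"
    then have "T - int k' - 1 \<in> {T0..<T}" unfolding m_def by auto
    then show "w (T - int k' - 1) \<in> pairs n" using w by auto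
  qed
  from part_inv[OF this] have P: "is_part n (part n T w m)"
    and E: "\<forall>k'<m. \<exists>B \<in> part n T w m. fst (w (T - int k' - 1)) \<in> B \<and> snd (w (T - int k' - 1)) \<in> B"
    by auto
  define P' where "P' = part n T w m"
  have bad': "P' \<noteq> {{1..n}}" using bad unfolding P'_def m_def by simp
  have disj: "\<forall>B\<in>P'. \<forall>C\<in>P'. B \<noteq> C \<longrightarrow> B \<inter> C = {}" and nonem: "\<forall>B\<in>P'. B \<noteq> {}"
    and un: "\<Union>P' = {1..n}" using P unfolding P'_def is_part_def by auto
  have "\<exists>B\<in>P'. B \<noteq> {1..n}"
  proof (rule ccontr)
    assume "\<not> ?thesis"
    then have "P' \<subseteq> {{1..n}}" by auto
    moreover have "P' \<noteq> {}" using un n by auto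
    ultimately show False using bad' by auto
  qed
  then obtain B where B: "B \<in> P'" "B \<noteq> {1..n}" by blast
  have Bsub: "B \<subseteq> {1..n}" using B un by auto
  have Bne: "B \<noteq> {}" using B nonem by auto
  have edges: "\<forall>t\<in>{T0..<T}. w t \<in> nc n B"
  proof
    fix t assume t: "t \<in> {T0..<T}"
    define k' where "k' = nat (T - t - 1)"
    have k': "k' < m" "t = T - int k' - 1" using t unfolding k'_def m_def by auto
    obtain C where C: "C \<in> P'" "fst (w t) \<in> C" "snd (w t) \<in> C"
      using E k' unfolding P'_def by metis
    have "w t \<in> pairs n" using w t by auto
    moreover have "(fst (w t) \<in> B) = (snd (w t) \<in> B)"
    proof (cases "C = B")
      case True then show ?thesis using C by auto
    next
      case False then have "C \<inter> B = {}" using disj C B by auto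
      then show ?thesis using C by auto
    qed
    ultimately show "w t \<in> nc n B" by (simp add: nc_def)
  qed
  show ?thesis
  proof (cases "2 * card B \<le> n")
    case True
    then have "B \<in> SS n" using Bsub Bne by (simp add: SS_def)
    then show ?thesis using edges by blast
  next
    case False
    define B' where "B' = {1..n} - B"
    have fB: "finite B" using Bsub finite_subset by blast
    have cB': "card B' = n - card B" unfolding B'_def using Bsub by (simp add: card_Diff_subset fB)
    have "B' \<noteq> {}" using Bsub B(2) unfolding B'_def by auto
    moreover have "2 * card B' \<le> n" using cB' False by linarith
    ultimately have "B' \<in> SS n" by (simp add: SS_def B'_def)
    moreover have "\<forall>t\<in>{T0..<T}. w t \<in> nc n B'"
    proof
      fix t assume t: "t \<in> {T0..<T}"
      then have "w t \<in> nc n B" using edges by auto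
      then show "w t \<in> nc n B'" unfolding nc_def B'_def pairs_def by auto
    qed
    ultimately show ?thesis by blast
  qed
qed

lemma finite_SS: "finite (SS n)"
  by (rule finite_subset[of _ "Pow {1..n}"]) (auto simp: SS_def)

lemma prob_ge:
  assumes n: "n \<ge> 2"
  shows "measure_pmf.prob (pair_choices n T0 T) {w. part n T w (nat (T - T0)) = {{1..n}}}
     \<ge> 1 - (\<Sum>S\<in>SS n. (real (card (nc n S)) / real (card (pairs n))) ^ nat (T - T0))"
proof -
  define I where "I = {T0..<T}"
  define m where "m = nat (T - T0)"
  define \<Omega> where "\<Omega> = PiE I (\<lambda>_. pairs n)"
  define G where "G = {w. part n T w (nat (T - T0)) = {{1..n}}}"
  define N where "N = card (pairs n)"
  have cI: "card I = m" unfolding I_def m_def by simp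
  have "(1,2) \<in> pairs n" using n by (auto simp: pairs_def)
  then have Npos: "N > 0" unfolding N_def using finite_pairs card_gt_0_iff by blast
  have finO: "finite \<Omega>" unfolding \<Omega>_def I_def by (intro finite_PiE finite_pairs) auto
  have cO: "card \<Omega> = N ^ m" unfolding \<Omega>_def N_def using cI by (simp add: card_PiE I_def)
  have neO: "\<Omega> \<noteq> {}" unfolding \<Omega>_def using \<open>(1,2) \<in> pairs n\<close> by (auto simp: PiE_eq_empty_iff)
  have pr: "measure_pmf.prob (pair_choices n T0 T) G = card (\<Omega> \<inter> G) / card \<Omega>"
    unfolding pair_choices_def using measure_pmf_of_set[OF neO finO] unfolding \<Omega>_def I_def by simp
  have sub: "\<Omega> - G \<subseteq> (\<Union>S\<in>SS n. PiE I (\<lambda>_. nc n S))"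
  proof
    fix w assume w: "w \<in> \<Omega> - G"
    then have w1: "w \<in> PiE {T0..<T} (\<lambda>_. pairs n)" "part n T w (nat (T - T0)) \<noteq> {{1..n}}"
      unfolding \<Omega>_def G_def I_def by auto
    obtain S where S: "S \<in> SS n" "\<forall>t\<in>{T0..<T}. w t \<in> nc n S"
      using bad_subset[OF _ w1] n by auto
    have "w \<in> PiE I (\<lambda>_. nc n S)" using S(2) w1(1) unfolding I_def by (auto simp: PiE_def)
    then show "w \<in> (\<Union>S\<in>SS n. PiE I (\<lambda>_. nc n S))" using S(1) by blast
  qed
  have "card (\<Omega> - G) \<le> card (\<Union>S\<in>SS n. PiE I (\<lambda>_. nc n S))"
    by (rule card_mono[OF _ sub]) (auto intro!: finite_PiE simp: I_def nc_def finite_SS finite_pairs)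
  also have "\<dots> \<le> (\<Sum>S\<in>SS n. card (PiE I (\<lambda>_. nc n S)))"
    by (rule card_UN_le[OF finite_SS])
  also have "\<dots> = (\<Sum>S\<in>SS n. card (nc n S) ^ m)"
    by (intro sum.cong refl) (simp add: card_PiE I_def m_def)
  finally have le: "card (\<Omega> - G) \<le> (\<Sum>S\<in>SS n. card (nc n S) ^ m)" .
  have split: "card (\<Omega> \<inter> G) + card (\<Omega> - G) = card \<Omega>"
  proof -
    have "card ((\<Omega> \<inter> G) \<union> (\<Omega> - G)) = card (\<Omega> \<inter> G) + card (\<Omega> - G)"
      by (rule card_Un_disjoint) (use finO in auto)
    moreover have "(\<Omega> \<inter> G) \<union> (\<Omega> - G) = \<Omega>" by blast
    ultimately show ?thesis by simp
  qed
  have "real (card (\<Omega> \<inter> G)) / card \<Omega> = 1 - real (card (\<Omega> - G)) / card \<Omega>"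
    using split neO finO by (simp add: field_simps card_gt_0_iff flip: of_nat_add)
  also have "\<dots> \<ge> 1 - real (\<Sum>S\<in>SS n. card (nc n S) ^ m) / card \<Omega>"
  proof -
    have "real (card (\<Omega> - G)) \<le> real (\<Sum>S\<in>SS n. card (nc n S) ^ m)" using le by (rule of_nat_mono)
    then have "real (card (\<Omega> - G)) / card \<Omega> \<le> real (\<Sum>S\<in>SS n. card (nc n S) ^ m) / card \<Omega>"
      by (rule divide_right_mono) simp
    then show ?thesis by linarith
  qed
  finally have "measure_pmf.prob (pair_choices n T0 T) G \<ge> 1 - real (\<Sum>S\<in>SS n. card (nc n S) ^ m) / real (N ^ m)"
    using pr cO by simp
  also have "real (\<Sum>S\<in>SS n. card (nc n S) ^ m) / real (N ^ m) = (\<Sum>S\<in>SS n. (real (card (nc n S)) / real N) ^ m)"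
    by (simp add: sum_divide_distrib power_divide)
  finally show ?thesis unfolding G_def N_def m_def .
qed

lemma sum_pow_card:
  fixes x :: real
  assumes "finite A"
  shows "(\<Sum>S\<in>Pow A. x ^ card S) = (1 + x) ^ card A"
  using assms
proof (induction A rule: finite_induct)
  case empty then show ?case by simp
next
  case (insert a A)
  have d: "Pow A \<inter> insert a ` Pow A = {}" using insert by auto
  have inj: "inj_on (insert a) (Pow A)" using insert by (auto simp: inj_on_def)
  have "(\<Sum>S\<in>Pow (insert a A). x ^ card S) = (\<Sum>S\<in>Pow A. x ^ card S) + (\<Sum>S\<in>insert a ` Pow A. x ^ card S)"
    unfolding Pow_insert by (rule sum.union_disjoint) (use insert d in auto)
  also have "(\<Sum>S\<in>insert a ` Pow A. x ^ card S) = (\<Sum>S\<in>Pow A. x ^ card (insert a S))"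
    by (rule sum.reindex[OF inj, unfolded comp_def])
  also have "\<dots> = (\<Sum>S\<in>Pow A. x * x ^ card S)"
  proof (intro sum.cong refl)
    fix S assume "S \<in> Pow A"
    then have "finite S" "a \<notin> S" using insert finite_subset by auto
    then show "x ^ card (insert a S) = x * x ^ card S" by simp
  qed
  finally show ?case using insert by (simp add: sum_distrib_left[symmetric] algebra_simps)
qed

lemma term_bound1:
  assumes n: "n \<ge> 2" and S: "S \<in> SS n"
  shows "real (card (nc n S)) / real (card (pairs n)) \<le> 1 - 2 * real (card S) * (real n - real (card S)) / (real n)^2"
proof -
  define N where "N = card (pairs n)"
  define k where "k = card S"
  have Ssub: "S \<subseteq> {1..n}" and k2: "2 * k \<le> n" using S by (auto simp: SS_def k_def)
  have "(1,2) \<in> pairs n" using n by (auto simp: pairs_def)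
  then have Npos: "N > 0" unfolding N_def using finite_pairs card_gt_0_iff by blast
  have "nc n S \<subseteq> pairs n" by (auto simp: nc_def)
  then have cnc: "card (nc n S) + card (pairs n - nc n S) = N"
    unfolding N_def by (metis add.commute card_Diff_subset finite_pairs finite_subset le_add_diff_inverse card_mono)
  have cr: "k * (n - k) \<le> card (pairs n - nc n S)" using card_cross_ge[OF Ssub] k_def by simp
  have "real (card (nc n S)) \<le> real N - real k * (real n - real k)"
  proof -
    have "card (nc n S) + k * (n - k) \<le> N" using cnc cr by linarith
    then have "real (card (nc n S)) + real (k * (n - k)) \<le> real N" by (metis of_nat_add of_nat_mono)
    moreover have "real (k * (n - k)) = real k * (real n - real k)" using k2 by (simp add: of_nat_diff)
    ultimately show ?thesis by linarith
  qed
  then have A: "real (card (nc n S)) / real N \<le> 1 - real k * (real n - real k) / real N"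
    using Npos by (simp add: field_simps)
  have "2 * real N \<le> (real n)^2" using card_pairs_le[of n] unfolding N_def by (metis of_nat_le_iff of_nat_mult of_nat_numeral of_nat_power)
  moreover have "real k * (real n - real k) \<ge> 0" using k2 by simp
  ultimately have "real k * (real n - real k) / ((real n)^2 / 2) \<le> real k * (real n - real k) / real N"
    using Npos n by (intro divide_left_mono) auto
  then have "2 * real k * (real n - real k) / (real n)^2 \<le> real k * (real n - real k) / real N"
    by (simp add: field_simps)
  then show ?thesis using A unfolding N_def k_def by linarith
qed

lemma term_bound2:
  fixes \<epsilon> :: real
  assumes n: "n \<ge> 2" and S: "S \<in> SS n" and e: "\<epsilon> > 0"
    and m: "real m \<ge> (1/2 + 2*\<epsilon>) * real n * ln (real n)"
  shows "(real (card (nc n S)) / real (card (pairs n))) ^ m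
     \<le> exp (-(1+2*\<epsilon>) * ln (real n)) ^ card S + exp (-(\<epsilon>/(1+4*\<epsilon>)) * real n * ln (real n) / 2)"
proof -
  define q where "q = real (card (nc n S)) / real (card (pairs n))"
  define k where "k = real (card S)"
  define nr where "nr = real n"
  define L where "L = ln nr"
  define c where "c = 1 + 4*\<epsilon>"
  define \<delta> where "\<delta> = \<epsilon>/(1+4*\<epsilon>)"
  define y where "y = 2 * k * (nr - k) / nr^2"
  have nr: "nr \<ge> 2" using n unfolding nr_def by simp
  have L: "L \<ge> 0" unfolding L_def using nr by simp
  have k1: "k \<ge> 1" and k2: "2 * k \<le> nr"
  proof -
    have "card S \<noteq> 0" using S finite_subset[of S "{1..n}"] by (auto simp: SS_def)
    then show "k \<ge> 1" unfolding k_def by simp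
    have "2 * card S \<le> n" using S by (simp add: SS_def)
    then show "2 * k \<le> nr" unfolding k_def nr_def by (metis of_nat_le_iff of_nat_mult of_nat_numeral)
  qed
  have q0: "q \<ge> 0" unfolding q_def by simp
  have qy: "q \<le> 1 - y" unfolding q_def y_def k_def nr_def using term_bound1[OF n S] by simp
  have "q ^ m \<le> (1 - y) ^ m" by (rule power_mono[OF qy q0])
  also have "\<dots> \<le> exp (-y) ^ m" using q0 qy by (intro power_mono) (use exp_ge_add_one_self[of "-y"] in auto)
  also have "\<dots> = exp (- (y * real m))" by (simp add: exp_of_nat_mult[symmetric] algebra_simps)
  also have "\<dots> \<le> exp (- (c * k * (nr - k) / nr * L))"
  proof -
    have y0: "y \<ge> 0" unfolding y_def using k1 k2 by simp
    have "y * real m \<ge> y * ((1/2 + 2*\<epsilon>) * nr * L)" using m y0 unfolding nr_def L_def by (simp add: mult_left_mono)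
    also have "y * ((1/2 + 2*\<epsilon>) * nr * L) = c * k * (nr - k) / nr * L"
      unfolding y_def c_def using nr by (simp add: field_simps power2_eq_square)
    finally show ?thesis by simp
  qed
  also have "\<dots> \<le> exp (-(1+2*\<epsilon>) * L) ^ card S + exp (-\<delta> * nr * L / 2)"
  proof (cases "k \<le> \<delta> * nr")
    case True
    have "(nr - k)/nr \<ge> 1 - \<delta>" using True nr by (simp add: field_simps)
    then have "c * ((nr - k)/nr) \<ge> c * (1 - \<delta>)" using e unfolding c_def by (intro mult_left_mono) auto
    moreover have "c * (1 - \<delta>) = 1 + 3*\<epsilon>" unfolding c_def \<delta>_def using e by (simp add: field_simps)
    ultimately have "c * ((nr - k)/nr) \<ge> 1 + 2*\<epsilon>" using e by linarith
    then have "(c * ((nr - k)/nr)) * (k * L) \<ge> (1 + 2*\<epsilon>) * (k * L)"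
      using k1 L by (intro mult_right_mono) auto
    then have "c * k * (nr - k) / nr * L \<ge> (1+2*\<epsilon>) * L * k" by (simp add: algebra_simps)
    then have "exp (- (c * k * (nr - k) / nr * L)) \<le> exp (-(1+2*\<epsilon>) * L * k)" by (subst exp_le_cancel_iff) argo
    also have "\<dots> = exp (-(1+2*\<epsilon>) * L) ^ card S"
      unfolding k_def by (simp add: exp_of_nat_mult[symmetric] algebra_simps)
    finally show ?thesis by (smt (verit) exp_gt_zero)
  next
    case False
    have "(nr - k)/nr \<ge> 1/2" using k2 nr by (simp add: field_simps)
    moreover have "c \<ge> 1" unfolding c_def using e by simp
    ultimately have "c * ((nr - k)/nr) \<ge> 1 * (1/2)" by (intro mult_mono) auto
    then have "(c * ((nr - k)/nr)) * (k * L) \<ge> (1/2) * (k * L)"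
      using k1 L by (intro mult_right_mono) auto
    moreover have "(1/2) * (k * L) \<ge> (1/2) * (\<delta> * nr * L)" using False L by (intro mult_left_mono mult_right_mono) auto
    ultimately have "c * k * (nr - k) / nr * L \<ge> \<delta> * nr * L / 2" by (simp add: algebra_simps)
    then have "exp (- (c * k * (nr - k) / nr * L)) \<le> exp (-\<delta> * nr * L / 2)" by simp
    then show ?thesis by (smt (verit) exp_gt_zero zero_le_power)
  qed
  finally show ?thesis unfolding q_def L_def nr_def \<delta>_def by simp
qed

lemma sum_bound:
  fixes \<epsilon> :: real
  assumes n: "n \<ge> 2" and e: "\<epsilon> > 0"
    and m: "real m \<ge> (1/2 + 2*\<epsilon>) * real n * ln (real n)"
  shows "(\<Sum>S\<in>SS n. (real (card (nc n S)) / real (card (pairs n))) ^ m)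
     \<le> ((1 + exp (-(1+2*\<epsilon>) * ln (real n))) ^ n - 1) + 2 ^ n * exp (-(\<epsilon>/(1+4*\<epsilon>)) * real n * ln (real n) / 2)"
proof -
  define x where "x = exp (-(1+2*\<epsilon>) * ln (real n))"
  define z where "z = exp (-(\<epsilon>/(1+4*\<epsilon>)) * real n * ln (real n) / 2)"
  have "(\<Sum>S\<in>SS n. (real (card (nc n S)) / real (card (pairs n))) ^ m) \<le> (\<Sum>S\<in>SS n. x ^ card S + z)"
    by (intro sum_mono) (use term_bound2[OF n _ e m] in \<open>simp add: x_def z_def\<close>)
  also have "\<dots> = (\<Sum>S\<in>SS n. x ^ card S) + real (card (SS n)) * z" by (simp add: sum.distrib)
  finally have 1: "(\<Sum>S\<in>SS n. (real (card (nc n S)) / real (card (pairs n))) ^ m) \<le> (\<Sum>S\<in>SS n. x ^ card S) + real (card (SS n)) * z" .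
  have "(\<Sum>S\<in>SS n. x ^ card S) \<le> (\<Sum>S\<in>Pow {1..n} - {{}}. x ^ card S)"
    by (intro sum_mono2) (auto simp: SS_def x_def)
  also have "\<dots> = (1 + x) ^ n - 1"
    using sum_pow_card[of "{1..n}" x] by (simp add: sum_diff1)
  finally have 2: "(\<Sum>S\<in>SS n. x ^ card S) \<le> (1 + x) ^ n - 1" .
  have 3: "real (card (SS n)) * z \<le> 2 ^ n * z"
  proof -
    have "card (SS n) \<le> card (Pow {1..n})" by (rule card_mono) (auto simp: SS_def)
    then have "real (card (SS n)) \<le> 2 ^ n" by (simp add: card_Pow)
    then show ?thesis unfolding z_def by (intro mult_right_mono) auto
  qed
  from 1 2 3 have "(\<Sum>S\<in>SS n. (real (card (nc n S)) / real (card (pairs n))) ^ m) \<le> ((1 + x) ^ n - 1) + 2 ^ n * z" by linarith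
  then show ?thesis unfolding x_def z_def .
qed

lemma numeric:
  fixes \<epsilon> :: real
  assumes n: "n \<ge> 2" and e: "\<epsilon> > 0"
    and a: "\<epsilon> * ln (real n) \<ge> ln 2"
    and b: "(\<epsilon>/(1+4*\<epsilon>)) * ln (real n) / 4 \<ge> ln 2"
    and c: "(\<epsilon>/(1+4*\<epsilon>)) * real n / 4 \<ge> \<epsilon>"
  shows "((1 + exp (-(1+2*\<epsilon>) * ln (real n))) ^ n - 1) + 2 ^ n * exp (-(\<epsilon>/(1+4*\<epsilon>)) * real n * ln (real n) / 2)
     \<le> 2 * real n powr (-\<epsilon>)"
proof -
  define L where "L = ln (real n)"
  define \<delta> where "\<delta> = \<epsilon>/(1+4*\<epsilon>)"
  define u where "u = exp (-\<epsilon> * L)"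
  have L: "L \<ge> 0" unfolding L_def using n by simp
  have nL: "real n = exp L" unfolding L_def using n by simp
  have u0: "u \<ge> 0" unfolding u_def by simp
  have uh: "u \<le> 1/2"
  proof -
    have "u \<le> exp (- ln 2)" unfolding u_def using a L_def by simp
    then show ?thesis by (simp add: exp_minus)
  qed
  have upow: "2 * u = 2 * real n powr (-\<epsilon>)" unfolding u_def powr_def L_def using n by simp
  have "(1 + exp (-(1+2*\<epsilon>) * L)) ^ n \<le> exp (exp (-(1+2*\<epsilon>) * L)) ^ n"
    by (intro power_mono) (use exp_ge_add_one_self[of "exp (-(1+2*\<epsilon>) * L)"] in \<open>auto simp: add.commute[of 1]\<close>)
  also have "\<dots> = exp (real n * exp (-(1+2*\<epsilon>) * L))" by (simp add: exp_of_nat_mult[symmetric])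
  also have "real n * exp (-(1+2*\<epsilon>) * L) = u^2"
  proof -
    have "real n * exp (-(1+2*\<epsilon>) * L) = exp (L + -(1+2*\<epsilon>) * L)" unfolding nL by (rule exp_add[symmetric])
    also have "L + -(1+2*\<epsilon>) * L = -\<epsilon> * L + -\<epsilon> * L" by algebra
    also have "exp (-\<epsilon> * L + -\<epsilon> * L) = u * u" unfolding u_def by (rule exp_add)
    finally show ?thesis by (simp add: power2_eq_square)
  qed
  also have "exp (u^2) \<le> 1 + u^2 + (u^2)^2"
  proof (rule exp_bound)
    show "0 \<le> u^2" by simp
    have "u \<le> 1" using uh by linarith
    then show "u^2 \<le> 1" using u0 by (simp add: power_le_one)
  qed
  also have "\<dots> \<le> 1 + u"
  proof -
    have "u * u \<le> u * (1/2)" by (rule mult_left_mono[OF uh u0])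
    then have "u^2 \<le> u/2" by (simp add: power2_eq_square)
    moreover have "(u^2)^2 \<le> u^2"
    proof -
      have "u^2 \<le> 1" using u0 uh by (simp add: power_le_one)
      then have "u^2 * u^2 \<le> u^2" by (rule mult_left_le) simp
      then show ?thesis by (simp add: power2_eq_square)
    qed
    ultimately show ?thesis by linarith
  qed
  finally have A: "(1 + exp (-(1+2*\<epsilon>) * L)) ^ n - 1 \<le> u" by simp
  have "(2::real) ^ n * exp (-\<delta> * real n * L / 2) = exp (real n * ln 2 - \<delta> * real n * L / 2)"
  proof -
    have "(2::real) ^ n = exp (ln 2) ^ n" by simp
    also have "\<dots> = exp (real n * ln 2)" by (rule exp_of_nat_mult[symmetric])
    finally have "(2::real) ^ n * exp (-\<delta> * real n * L / 2) = exp (real n * ln 2) * exp (-\<delta> * real n * L / 2)" by simp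
    also have "\<dots> = exp (real n * ln 2 + -\<delta> * real n * L / 2)" by (rule exp_add[symmetric])
    finally show ?thesis by simp
  qed
  also have "\<dots> \<le> exp (-\<epsilon> * L)"
  proof -
    have "real n * ln 2 \<le> real n * (\<delta> * L / 4)" using b unfolding \<delta>_def L_def by (intro mult_left_mono) auto
    moreover have "\<epsilon> * L \<le> (\<delta> * real n / 4) * L" using c L unfolding \<delta>_def by (intro mult_right_mono) auto
    ultimately have "real n * ln 2 - \<delta> * real n * L / 2 \<le> -\<epsilon> * L" by (simp add: algebra_simps)
    then show ?thesis by simp
  qed
  finally have B: "(2::real) ^ n * exp (-\<delta> * real n * L / 2) \<le> u" unfolding u_def .
  show ?thesis using A B upow unfolding L_def \<delta>_def by linarith
qed

theorem lemma4p3: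
  fixes \<epsilon> :: real
  assumes "\<epsilon> > 0"
  shows "\<exists>N0::nat. \<forall>n::nat. n > N0 \<longrightarrow> (\<forall>T0 T :: int.
           real_of_int T > real_of_int T0 + (1/2 + 2*\<epsilon>) * real n * ln (real n) \<longrightarrow>
           measure_pmf.prob (pair_choices n T0 T)
             {w. part n T w (nat (T - T0)) = {{1..n}}} \<ge> 1 - 2 * real n powr (-\<epsilon>))"
proof -
  define \<delta> where "\<delta> = \<epsilon>/(1+4*\<epsilon>)"
  have d0: "\<delta> > 0" unfolding \<delta>_def using assms by simp
  define A where "A = ln 2/\<epsilon> + 4*ln 2/\<delta>"
  define N0 where "N0 = nat \<lceil>exp A\<rceil> + nat \<lceil>4*\<epsilon>/\<delta>\<rceil> + 2"
  show ?thesis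
  proof (intro exI allI impI)
    fix n :: nat and T0 T :: int
    assume nN: "n > N0"
    assume TT: "real_of_int T > real_of_int T0 + (1/2 + 2*\<epsilon>) * real n * ln (real n)"
    have n2: "n \<ge> 2" using nN unfolding N0_def by linarith
    have "real n \<ge> exp A"
    proof -
      have "n \<ge> nat \<lceil>exp A\<rceil>" using nN unfolding N0_def by linarith
      then have "real n \<ge> real (nat \<lceil>exp A\<rceil>)" by (rule of_nat_mono)
      moreover have "real (nat \<lceil>exp A\<rceil>) \<ge> exp A" by linarith
      ultimately show ?thesis by linarith
    qed
    then have LA: "ln (real n) \<ge> A" using ln_le_cancel_iff[of "exp A" "real n"] n2 by simp
    have c: "real n \<ge> 4*\<epsilon>/\<delta>"
    proof -
      have "n \<ge> nat \<lceil>4*\<epsilon>/\<delta>\<rceil>" using nN unfolding N0_def by linarith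
      then have "real n \<ge> real (nat \<lceil>4*\<epsilon>/\<delta>\<rceil>)" by (rule of_nat_mono)
      moreover have "real (nat \<lceil>4*\<epsilon>/\<delta>\<rceil>) \<ge> 4*\<epsilon>/\<delta>" by linarith
      ultimately show ?thesis by linarith
    qed
    have p1: "ln 2/\<epsilon> \<ge> 0" "4*ln 2/\<delta> \<ge> 0" using assms d0 by auto
    have ca: "\<epsilon> * ln (real n) \<ge> ln 2"
    proof -
      have "ln (real n) \<ge> ln 2/\<epsilon>" using LA p1 unfolding A_def by linarith
      then show ?thesis using assms by (simp add: field_simps)
    qed
    have cb: "\<delta> * ln (real n) / 4 \<ge> ln 2"
    proof -
      have "ln (real n) \<ge> 4*ln 2/\<delta>" using LA p1 unfolding A_def by linarith
      then show ?thesis using d0 by (simp add: field_simps)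
    qed
    have cc: "\<delta> * real n / 4 \<ge> \<epsilon>" using c d0 by (simp add: field_simps)
    have L0: "ln (real n) \<ge> 0" using n2 by simp
    have m: "real (nat (T - T0)) \<ge> (1/2 + 2*\<epsilon>) * real n * ln (real n)"
    proof -
      have "(1/2 + 2*\<epsilon>) * real n * ln (real n) \<ge> 0" using assms L0 by simp
      then have "T - T0 > 0" using TT by linarith
      then have "real (nat (T - T0)) = real_of_int (T - T0)" by simp
      then show ?thesis using TT by simp
    qed
    have "measure_pmf.prob (pair_choices n T0 T) {w. part n T w (nat (T - T0)) = {{1..n}}}
      \<ge> 1 - (\<Sum>S\<in>SS n. (real (card (nc n S)) / real (card (pairs n))) ^ nat (T - T0))"
      by (rule prob_ge[OF n2])
    moreover have "(\<Sum>S\<in>SS n. (real (card (nc n S)) / real (card (pairs n))) ^ nat (T - T0)) \<le> 2 * real n powr (-\<epsilon>)"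
      using sum_bound[OF n2 assms m] numeric[OF n2 assms ca cb[unfolded \<delta>_def] cc[unfolded \<delta>_def]] by linarith
    ultimately show "measure_pmf.prob (pair_choices n T0 T) {w. part n T w (nat (T - T0)) = {{1..n}}} \<ge> 1 - 2 * real n powr (-\<epsilon>)"
      by linarith
  qed
qed

end
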